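(* Let $(W,S)$ be a Coxeter system with $S$ finite, and let $F:W\to\operatorname{Ad}(Q_W)$ be the map with $F(w)=e_{s_1}\cdots e_{s_k}$ whenever $w=s_1\cdots s_k$ ($s_i\in S$) is a reduced expression. Define $c:W\times W\to C_W$ by $c(w_1,w_2)=F(w_1)F(w_2)F(w_1w_2)^{-1}$. Then $c$ is a normalized $2$-cocycle (with values in the trivial $W$-module $C_W$), and its cohomology class $[c]\in H^2(W,C_W)$ equals the class $u_\phi$ of the central extension $1\to C_W\to\operatorname{Ad}(Q_W)\xrightarrow{\phi}W\to1$.
   Context: A Coxeter system $(W,S)$: $S$ finite, $m:S\times S\to\mathbb{N}\cup\{\infty\}$ with $m(s,s)=1$, $2\le m(s,t)=m(t,s)\le\infty$ for $s\ne t$, $W=\langle s\in S\mid (st)^{m(s,t)}=1\ (m(s,t)<\infty)\rangle$. The Coxeter quandle $Q_W=\bigcup_{w\in W}w^{-1}Sw$ has operation $x\ast y=yxy$; $\operatorname{Ad}(Q_W)=\langle e_x\ (x\in Q_W)\mid e_y^{-1}e_xe_y=e_{x\ast y}\rangle$; $\phi:\operatorname{Ad}(Q_W)\to W$ is $e_x\mapsto x$, and $C_W=\ker\phi$, which is a central subgroup. The map $F$ is well defined, i.e. the product $e_{s_1}\cdots e_{s_k}$ does not depend on the choice of reduced expression of $w$ (this follows from Matsumoto's theorem, since $(e_se_t)_{m(s,t)}=(e_te_s)_{m(s,t)}$ holds, where $(gh)_m$ denotes the alternating product $ghg\cdots$ with $m$ factors). The class $u_\phi$ is the element of $H^2(W,C_W)$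 classifying the central extension in the standard way. *)

theory Defs
  imports "HOL-Algebra.Algebra" "HOL-Library.Extended_Nat"
begin

text \<open>Words in the free group on generators of type 'x: a letter (x, True) stands for x,
  a letter (x, False) for its inverse.\<close>

type_synonym 'x word = "('x \<times> bool) list"

definition words_on :: "'x set \<Rightarrow> 'x word set" where
  "words_on Xs = {w. fst ` set w \<subseteq> Xs}"

inductive pres_eq :: "('x word \<times> 'x word) set \<Rightarrow> 'x word \<Rightarrow> 'x word \<Rightarrow> bool"
  for R :: "('x word \<times> 'x word) set" where
  pe_refl: "pres_eq R w w"
| pe_sym: "pres_eq R u v \<Longrightarrow> pres_eq R v u"
| pe_trans: "pres_eq R u v \<Longrightarrow> pres_eq R v w \<Longrightarrow> pres_eq R u w"
| pe_cancel: "pres_eq R (u @ [(x, b), (x, \<not> b)] @ v) (u @ v)"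
| pe_rel: "(r1, r2) \<in> R \<Longrightarrow> pres_eq R (u @ r1 @ v) (u @ r2 @ v)"

definition pres_class :: "'x set \<Rightarrow> ('x word \<times> 'x word) set \<Rightarrow> 'x word \<Rightarrow> 'x word set" where
  "pres_class Xs R w = {v \<in> words_on Xs. pres_eq R w v}"

definition presented_group :: "'x set \<Rightarrow> ('x word \<times> 'x word) set \<Rightarrow> 'x word set monoid" where
  "presented_group Xs R =
     \<lparr>carrier = pres_class Xs R ` words_on Xs,
      monoid.mult = (\<lambda>A B. {v. \<exists>a\<in>A. \<exists>b\<in>B. v \<in> pres_class Xs R (a @ b)}),
      monoid.one = pres_class Xs R []\<rparr>"

definition pres_gen :: "'x set \<Rightarrow> ('x word \<times> 'x word) set \<Rightarrow> 'x \<Rightarrow> 'x word set" where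
  "pres_gen Xs R x = pres_class Xs R [(x, True)]"

definition word_eval :: "('g, 'm) monoid_scheme \<Rightarrow> ('x \<Rightarrow> 'g) \<Rightarrow> 'x word \<Rightarrow> 'g" where
  "word_eval G f w = foldr (\<lambda>(x, b) acc. (if b then f x else inv\<^bsub>G\<^esub> (f x)) \<otimes>\<^bsub>G\<^esub> acc) w \<one>\<^bsub>G\<^esub>"

definition induced_map :: "('g, 'm) monoid_scheme \<Rightarrow> ('x \<Rightarrow> 'g) \<Rightarrow> 'x word set \<Rightarrow> 'g" where
  "induced_map G f A = word_eval G f (SOME a. a \<in> A)"

definition coxeter_matrix :: "('s \<Rightarrow> 's \<Rightarrow> enat) \<Rightarrow> bool" where
  "coxeter_matrix m \<longleftrightarrow> (\<forall>s. m s s = 1) \<and> (\<forall>s t. s \<noteq> t \<longrightarrow> 2 \<le> m s t \<and> m s t = m t s)"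

definition coxeter_rels :: "('s \<Rightarrow> 's \<Rightarrow> enat) \<Rightarrow> ('s word \<times> 's word) set" where
  "coxeter_rels m = {(concat (replicate k [(s, True), (t, True)]), []) | s t k. m s t = enat k}"

definition coxeter_group :: "('s \<Rightarrow> 's \<Rightarrow> enat) \<Rightarrow> 's word set monoid" where
  "coxeter_group m = presented_group UNIV (coxeter_rels m)"

definition cox_gen :: "('s \<Rightarrow> 's \<Rightarrow> enat) \<Rightarrow> 's \<Rightarrow> 's word set" where
  "cox_gen m s = pres_gen UNIV (coxeter_rels m) s"

definition cox_prod :: "('s \<Rightarrow> 's \<Rightarrow> enat) \<Rightarrow> 's list \<Rightarrow> 's word set" where
  "cox_prod m ss = foldr (\<lambda>s acc. cox_gen m s \<otimes>\<^bsub>coxeter_group m\<^esub> acc) ss \<one>\<^bsub>coxeter_group m\<^esub>"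

definition reduced_expr :: "('s \<Rightarrow> 's \<Rightarrow> enat) \<Rightarrow> 's word set \<Rightarrow> 's list \<Rightarrow> bool" where
  "reduced_expr m w ss \<longleftrightarrow> cox_prod m ss = w \<and> (\<forall>ts. cox_prod m ts = w \<longrightarrow> length ss \<le> length ts)"

definition coxeter_quandle :: "('s \<Rightarrow> 's \<Rightarrow> enat) \<Rightarrow> 's word set set" where
  "coxeter_quandle m = (\<Union>w\<in>carrier (coxeter_group m). \<Union>s. 
      {inv\<^bsub>coxeter_group m\<^esub> w \<otimes>\<^bsub>coxeter_group m\<^esub> cox_gen m s \<otimes>\<^bsub>coxeter_group m\<^esub> w})"

definition quandle_op :: "('s \<Rightarrow> 's \<Rightarrow> enat) \<Rightarrow> 's word set \<Rightarrow> 's word set \<Rightarrow> 's word set" where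
  "quandle_op m x y = y \<otimes>\<^bsub>coxeter_group m\<^esub> x \<otimes>\<^bsub>coxeter_group m\<^esub> y"

definition adj_rels :: "('s \<Rightarrow> 's \<Rightarrow> enat) \<Rightarrow> ('s word set word \<times> 's word set word) set" where
  "adj_rels m = {([(y, False), (x, True), (y, True)], [(quandle_op m x y, True)]) | x y.
                  x \<in> coxeter_quandle m \<and> y \<in> coxeter_quandle m}"

definition adj_group :: "('s \<Rightarrow> 's \<Rightarrow> enat) \<Rightarrow> 's word set word set monoid" where
  "adj_group m = presented_group (coxeter_quandle m) (adj_rels m)"

definition adj_gen :: "('s \<Rightarrow> 's \<Rightarrow> enat) \<Rightarrow> 's word set \<Rightarrow> 's word set word set" where
  "adj_gen m x = pres_gen (coxeter_quandle m) (adj_rels m) x"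

definition adj_phi :: "('s \<Rightarrow> 's \<Rightarrow> enat) \<Rightarrow> 's word set word set \<Rightarrow> 's word set" where
  "adj_phi m = induced_map (coxeter_group m) id"

definition C_group :: "('s \<Rightarrow> 's \<Rightarrow> enat) \<Rightarrow> 's word set word set monoid" where
  "C_group m = (adj_group m)\<lparr>carrier := kernel (adj_group m) (coxeter_group m) (adj_phi m)\<rparr>"

definition F_map :: "('s \<Rightarrow> 's \<Rightarrow> enat) \<Rightarrow> 's word set \<Rightarrow> 's word set word set" where
  "F_map m w = foldr (\<lambda>s acc. adj_gen m (cox_gen m s) \<otimes>\<^bsub>adj_group m\<^esub> acc)
                 (SOME ss. reduced_expr m w ss) \<one>\<^bsub>adj_group m\<^esub>"

definition cox_c :: "('s \<Rightarrow> 's \<Rightarrow> enat) \<Rightarrow> 's word set \<Rightarrow> 's word set \<Rightarrow> 's word set word set" where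
  "cox_c m w1 w2 = F_map m w1 \<otimes>\<^bsub>adj_group m\<^esub> F_map m w2 \<otimes>\<^bsub>adj_group m\<^esub>
                    inv\<^bsub>adj_group m\<^esub> (F_map m (w1 \<otimes>\<^bsub>coxeter_group m\<^esub> w2))"

section \<open>Second cohomology with coefficients in a trivial module (written multiplicatively)\<close>

definition two_cocycle :: "('g, 'm) monoid_scheme \<Rightarrow> ('k, 'n) monoid_scheme \<Rightarrow> ('g \<Rightarrow> 'g \<Rightarrow> 'k) \<Rightarrow> bool" where
  "two_cocycle G K c \<longleftrightarrow>
     (\<forall>a\<in>carrier G. \<forall>b\<in>carrier G. c a b \<in> carrier K) \<and>
     (\<forall>a\<in>carrier G. \<forall>b\<in>carrier G. \<forall>d\<in>carrier G.
        c b d \<otimes>\<^bsub>K\<^esub> c a (b \<otimes>\<^bsub>G\<^esub> d) = c (a \<otimes>\<^bsub>G\<^esub> b) d \<otimes>\<^bsub>K\<^esub> c a b)"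

definition normalized_two_cocycle :: "('g, 'm) monoid_scheme \<Rightarrow> ('k, 'n) monoid_scheme \<Rightarrow> ('g \<Rightarrow> 'g \<Rightarrow> 'k) \<Rightarrow> bool" where
  "normalized_two_cocycle G K c \<longleftrightarrow> two_cocycle G K c \<and>
     (\<forall>a\<in>carrier G. c \<one>\<^bsub>G\<^esub> a = \<one>\<^bsub>K\<^esub> \<and> c a \<one>\<^bsub>G\<^esub> = \<one>\<^bsub>K\<^esub>)"

definition cohomologous :: "('g, 'm) monoid_scheme \<Rightarrow> ('k, 'n) monoid_scheme \<Rightarrow> ('g \<Rightarrow> 'g \<Rightarrow> 'k) \<Rightarrow> ('g \<Rightarrow> 'g \<Rightarrow> 'k) \<Rightarrow> bool" where
  "cohomologous G K c d \<longleftrightarrow> (\<exists>f \<in> carrier G \<rightarrow> carrier K. \<forall>a\<in>carrier G. \<forall>b\<in>carrier G.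
       c a b = d a b \<otimes>\<^bsub>K\<^esub> (f a \<otimes>\<^bsub>K\<^esub> f b \<otimes>\<^bsub>K\<^esub> inv\<^bsub>K\<^esub> (f (a \<otimes>\<^bsub>G\<^esub> b))))"

definition coh_class :: "('g, 'm) monoid_scheme \<Rightarrow> ('k, 'n) monoid_scheme \<Rightarrow> ('g \<Rightarrow> 'g \<Rightarrow> 'k) \<Rightarrow> ('g \<Rightarrow> 'g \<Rightarrow> 'k) set" where
  "coh_class G K c = {d. two_cocycle G K d \<and> cohomologous G K d c}"

text \<open>Class u_\<phi> of a central extension 1 \<rightarrow> ker \<phi> \<rightarrow> E \<rightarrow> G \<rightarrow> 1: the class of the cocycle
  (a,b) \<mapsto> \<sigma>(a)\<sigma>(b)\<sigma>(ab)^{-1} of a set-theoretic section \<sigma> of \<phi> (independent of \<sigma>).\<close>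
definition section_cocycle :: "('e, 'm) monoid_scheme \<Rightarrow> ('g, 'n) monoid_scheme \<Rightarrow> ('g \<Rightarrow> 'e) \<Rightarrow> 'g \<Rightarrow> 'g \<Rightarrow> 'e" where
  "section_cocycle E G \<sigma> a b = \<sigma> a \<otimes>\<^bsub>E\<^esub> \<sigma> b \<otimes>\<^bsub>E\<^esub> inv\<^bsub>E\<^esub> (\<sigma> (a \<otimes>\<^bsub>G\<^esub> b))"

definition extension_class :: "('e, 'm) monoid_scheme \<Rightarrow> ('g, 'n) monoid_scheme \<Rightarrow> ('e \<Rightarrow> 'g) \<Rightarrow> ('g \<Rightarrow> 'g \<Rightarrow> 'e) set" where
  "extension_class E G \<phi> =
     (\<Union>\<sigma> \<in> {\<sigma>. \<sigma> \<in> carrier G \<rightarrow> carrier E \<and> (\<forall>g\<in>carrier G. \<phi> (\<sigma> g) = g)}.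
        coh_class G (E\<lparr>carrier := kernel E G \<phi>\<rparr>) (section_cocycle E G \<sigma>))"

end

theory Submission
  imports Defs
begin
section \<open>Presented groups\<close>

lemma pres_eq_ctxt: "pres_eq R u v \<Longrightarrow> pres_eq R (p @ u @ q) (p @ v @ q)"
proof (induction rule: pres_eq.induct)
  case (pe_refl w) then show ?case by (rule pres_eq.pe_refl)
next
  case (pe_sym u v) show ?case using pe_sym.IH by (rule pres_eq.pe_sym)
next
  case (pe_trans u v w) then show ?case by (metis pres_eq.pe_trans)
next
  case (pe_cancel u x b v)
  have "pres_eq R ((p @ u) @ [(x, b), (x, \<not> b)] @ (v @ q)) ((p @ u) @ (v @ q))"
    by (rule pres_eq.pe_cancel)
  then show ?case by simp
next
  case (pe_rel r1 r2 u v)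
  have "pres_eq R ((p @ u) @ r1 @ (v @ q)) ((p @ u) @ r2 @ (v @ q))"
    using pe_rel by (rule pres_eq.pe_rel)
  then show ?case by simp
qed

lemma pres_eq_append:
  assumes "pres_eq R u u'" "pres_eq R v v'"
  shows "pres_eq R (u @ v) (u' @ v')"
proof -
  have "pres_eq R ([] @ u @ v) ([] @ u' @ v)" by (rule pres_eq_ctxt[OF assms(1)])
  moreover have "pres_eq R (u' @ v @ []) (u' @ v' @ [])" by (rule pres_eq_ctxt[OF assms(2)])
  ultimately show ?thesis by (auto intro: pres_eq.pe_trans)
qed

definition winv :: "'x word \<Rightarrow> 'x word" where
  "winv w = rev (map (\<lambda>(x, b). (x, \<not> b)) w)"

lemma winv_simps [simp]: "winv [] = []" "winv (a # w) = winv w @ [(fst a, \<not> snd a)]"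
  "winv (u @ v) = winv v @ winv u" "winv (winv w) = w"
  by (auto simp: winv_def case_prod_beta rev_map comp_def)

lemma words_on_simps [simp]: "[] \<in> words_on Xs" "(a # w \<in> words_on Xs) = (fst a \<in> Xs \<and> w \<in> words_on Xs)"
  "(u @ v \<in> words_on Xs) = (u \<in> words_on Xs \<and> v \<in> words_on Xs)"
  "(winv w \<in> words_on Xs) = (w \<in> words_on Xs)"
  by (auto simp: words_on_def winv_def case_prod_beta image_image)

lemma pres_eq_winv: "pres_eq R (w @ winv w) []"
proof (induction w)
  case Nil then show ?case by (simp add: pres_eq.pe_refl)
next
  case (Cons a w)
  obtain x b where a: "a = (x, b)" by force
  have "pres_eq R ([a] @ (w @ winv w) @ [(x, \<not> b)]) ([a] @ [] @ [(x, \<not> b)])"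
    by (rule pres_eq_ctxt[OF Cons])
  moreover have "pres_eq R ([] @ [(x, b), (x, \<not> b)] @ []) ([] @ [])" by (rule pres_eq.pe_cancel)
  ultimately show ?case using a by (auto intro: pres_eq.pe_trans)
qed

lemma pres_eq_winv2: "pres_eq R (winv w @ w) []"
  using pres_eq_winv[of R "winv w"] by simp

lemma pres_class_self: "w \<in> words_on Xs \<Longrightarrow> w \<in> pres_class Xs R w"
  by (simp add: pres_class_def pres_eq.pe_refl)

lemma pres_class_eq_iff:
  assumes "u \<in> words_on Xs" "v \<in> words_on Xs"
  shows "pres_class Xs R u = pres_class Xs R v \<longleftrightarrow> pres_eq R u v"
proof
  assume "pres_class Xs R u = pres_class Xs R v"
  then have "v \<in> pres_class Xs R u" using pres_class_self[OF assms(2)] by simp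
  then show "pres_eq R u v" by (simp add: pres_class_def)
next
  assume h: "pres_eq R u v"
  show "pres_class Xs R u = pres_class Xs R v"
    unfolding pres_class_def using h by (auto intro: pres_eq.pe_trans pres_eq.pe_sym)
qed

lemma pres_class_eqI: "pres_eq R u v \<Longrightarrow> pres_class Xs R u = pres_class Xs R v"
  unfolding pres_class_def by (auto intro: pres_eq.pe_trans pres_eq.pe_sym)

lemma pres_class_mem: "v \<in> pres_class Xs R u \<Longrightarrow> pres_class Xs R v = pres_class Xs R u"
  unfolding pres_class_def by (auto intro: pres_eq.pe_trans pres_eq.pe_sym)

lemma pg_carrier: "carrier (presented_group Xs R) = pres_class Xs R ` words_on Xs"
  by (simp add: presented_group_def)

lemma pg_one: "\<one>\<^bsub>presented_group Xs R\<^esub> = pres_class Xs R []"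
  by (simp add: presented_group_def)

lemma pg_mult:
  assumes "u \<in> words_on Xs" "v \<in> words_on Xs"
  shows "pres_class Xs R u \<otimes>\<^bsub>presented_group Xs R\<^esub> pres_class Xs R v = pres_class Xs R (u @ v)"
proof -
  have "{w. \<exists>a\<in>pres_class Xs R u. \<exists>b\<in>pres_class Xs R v. w \<in> pres_class Xs R (a @ b)} = pres_class Xs R (u @ v)"
  proof safe
    fix w a b assume "a \<in> pres_class Xs R u" "b \<in> pres_class Xs R v" "w \<in> pres_class Xs R (a @ b)"
    then have "pres_eq R u a" "pres_eq R v b" by (auto simp: pres_class_def)
    then have "pres_class Xs R (a @ b) = pres_class Xs R (u @ v)"
      by (metis pres_class_eqI pres_eq_append pres_eq.pe_sym)
    then show "w \<in> pres_class Xs R (u @ v)" using \<open>w \<in> pres_class Xs R (a @ b)\<close> by simp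
  next
    fix w assume "w \<in> pres_class Xs R (u @ v)"
    then show "\<exists>a\<in>pres_class Xs R u. \<exists>b\<in>pres_class Xs R v. w \<in> pres_class Xs R (a @ b)"
      using pres_class_self assms by blast
  qed
  then show ?thesis by (simp add: presented_group_def)
qed

lemma pg_group: "group (presented_group Xs R)"
proof (rule groupI)
  fix x y assume "x \<in> carrier (presented_group Xs R)" "y \<in> carrier (presented_group Xs R)"
  then show "x \<otimes>\<^bsub>presented_group Xs R\<^esub> y \<in> carrier (presented_group Xs R)"
    by (auto simp: pg_carrier pg_mult)
next
  show "\<one>\<^bsub>presented_group Xs R\<^esub> \<in> carrier (presented_group Xs R)"
    by (auto simp: pg_carrier pg_one)
next
  fix x y z assume "x \<in> carrier (presented_group Xs R)" "y \<in> carrier (presented_group Xs R)"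
    "z \<in> carrier (presented_group Xs R)"
  then show "x \<otimes>\<^bsub>presented_group Xs R\<^esub> y \<otimes>\<^bsub>presented_group Xs R\<^esub> z =
           x \<otimes>\<^bsub>presented_group Xs R\<^esub> (y \<otimes>\<^bsub>presented_group Xs R\<^esub> z)"
    by (auto simp: pg_carrier pg_mult)
next
  fix x assume "x \<in> carrier (presented_group Xs R)"
  then show "\<one>\<^bsub>presented_group Xs R\<^esub> \<otimes>\<^bsub>presented_group Xs R\<^esub> x = x"
    by (auto simp: pg_carrier pg_mult pg_one)
next
  fix x assume "x \<in> carrier (presented_group Xs R)"
  then obtain w where w: "w \<in> words_on Xs" "x = pres_class Xs R w" by (auto simp: pg_carrier)
  have "pres_class Xs R (winv w) \<otimes>\<^bsub>presented_group Xs R\<^esub> x = \<one>\<^bsub>presented_group Xs R\<^esub>"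
    using w by (simp add: pg_mult pg_one pres_class_eqI pres_eq_winv2)
  moreover have "pres_class Xs R (winv w) \<in> carrier (presented_group Xs R)"
    using w by (simp add: pg_carrier)
  ultimately show "\<exists>y\<in>carrier (presented_group Xs R). y \<otimes>\<^bsub>presented_group Xs R\<^esub> x = \<one>\<^bsub>presented_group Xs R\<^esub>"
    by blast
qed

lemma pg_inv:
  assumes "w \<in> words_on Xs"
  shows "inv\<^bsub>presented_group Xs R\<^esub> (pres_class Xs R w) = pres_class Xs R (winv w)"
  using assms by (intro group.inv_equality[OF pg_group]) (auto simp: pg_mult pg_one pres_class_eqI pres_eq_winv2 pg_carrier)

section \<open>Word evaluation\<close>

lemma filter_words_on: "w \<in> words_on Xs \<Longrightarrow> filter (\<lambda>p. fst p \<in> Xs) w = w"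
  by (induction w) auto

lemma word_eval_simps [simp]:
  "word_eval G f [] = \<one>\<^bsub>G\<^esub>"
  "word_eval G f ((x, b) # w) = (if b then f x else inv\<^bsub>G\<^esub> (f x)) \<otimes>\<^bsub>G\<^esub> word_eval G f w"
  by (simp_all add: word_eval_def)

context group begin

lemma comm_prod:
  assumes "a \<in> carrier G" "b \<in> carrier G" "g \<in> carrier G" "a \<otimes> g = g \<otimes> a" "b \<otimes> g = g \<otimes> b"
  shows "(a \<otimes> b) \<otimes> g = g \<otimes> (a \<otimes> b)"
proof -
  have "(a \<otimes> b) \<otimes> g = a \<otimes> (b \<otimes> g)" using assms by (simp add: m_assoc)
  also have "\<dots> = a \<otimes> (g \<otimes> b)" using assms by simp
  also have "\<dots> = (a \<otimes> g) \<otimes> b" using assms by (metis m_assoc)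
  also have "\<dots> = (g \<otimes> a) \<otimes> b" using assms by simp
  also have "\<dots> = g \<otimes> (a \<otimes> b)" using assms by (metis m_assoc)
  finally show ?thesis .
qed

lemma comm_inv:
  assumes a: "a \<in> carrier G" and g: "g \<in> carrier G" and c: "a \<otimes> g = g \<otimes> a"
  shows "inv a \<otimes> g = g \<otimes> inv a"
proof -
  have "inv a \<otimes> g = inv a \<otimes> (g \<otimes> (a \<otimes> inv a))" using a g by simp
  also have "\<dots> = inv a \<otimes> ((g \<otimes> a) \<otimes> inv a)" using a g by (simp add: m_assoc)
  also have "\<dots> = inv a \<otimes> ((a \<otimes> g) \<otimes> inv a)" using c by simp
  also have "\<dots> = g \<otimes> inv a" using a g by (simp add: m_assoc[symmetric])
  finally show ?thesis .
qed

lemma word_eval_closed: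
  assumes "f ` Xs \<subseteq> carrier G" "w \<in> words_on Xs"
  shows "word_eval G f w \<in> carrier G"
  using assms(2) by (induction w) (use assms(1) in auto)

lemma word_eval_append:
  assumes "f ` Xs \<subseteq> carrier G" "u \<in> words_on Xs" "v \<in> words_on Xs"
  shows "word_eval G f (u @ v) = word_eval G f u \<otimes> word_eval G f v"
  using assms(2)
proof (induction u)
  case Nil then show ?case using word_eval_closed[OF assms(1,3)] by simp
next
  case (Cons a u)
  obtain x b where a: "a = (x, b)" by force
  have fx: "f x \<in> carrier G" using Cons.prems a assms(1) by auto
  show ?case using Cons a fx word_eval_closed[OF assms(1)] assms(3) by (simp add: m_assoc)
qed

lemma word_eval_pres_eq:
  assumes f: "f ` Xs \<subseteq> carrier G"
    and R: "R \<subseteq> words_on Xs \<times> words_on Xs"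
    and Rv: "\<And>r1 r2. (r1, r2) \<in> R \<Longrightarrow> word_eval G f r1 = word_eval G f r2"
    and h: "pres_eq R u v"
  shows "word_eval G f (filter (\<lambda>p. fst p \<in> Xs) u) = word_eval G f (filter (\<lambda>p. fst p \<in> Xs) v)"
  using h
proof (induction rule: pres_eq.induct)
  case (pe_cancel u x b v)
  let ?P = "\<lambda>p. fst p \<in> Xs"
  have fu: "filter ?P u \<in> words_on Xs" and fv: "filter ?P v \<in> words_on Xs"
    by (auto simp: words_on_def)
  show ?case
  proof (cases "x \<in> Xs")
    case True
    have fx: "f x \<in> carrier G" using f True by auto
    have E: "word_eval G f (filter ?P v) \<in> carrier G" using word_eval_closed[OF f fv] .
    have c: "word_eval G f ((x, b) # (x, \<not> b) # filter ?P v) = word_eval G f (filter ?P v)"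
    proof (cases b)
      case True
      then show ?thesis using fx E by (simp add: m_assoc[symmetric])
    next
      case False
      then show ?thesis using fx E by (simp add: m_assoc[symmetric])
    qed
    have "filter ?P (u @ [(x, b), (x, \<not> b)] @ v) = filter ?P u @ ((x, b) # (x, \<not> b) # filter ?P v)"
      using True by simp
    moreover have "word_eval G f (filter ?P u @ ((x, b) # (x, \<not> b) # filter ?P v))
        = word_eval G f (filter ?P u) \<otimes> word_eval G f ((x, b) # (x, \<not> b) # filter ?P v)"
      by (rule word_eval_append[OF f fu]) (use True fv in simp)
    moreover have "word_eval G f (filter ?P (u @ v)) = word_eval G f (filter ?P u) \<otimes> word_eval G f (filter ?P v)"
      using word_eval_append[OF f fu fv] by simp
    ultimately show ?thesis using c by (simp only:)
  qed simp
next
  case (pe_rel r1 r2 u v)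
  let ?P = "\<lambda>p. fst p \<in> Xs"
  have fu: "filter ?P u \<in> words_on Xs" and fv: "filter ?P v \<in> words_on Xs"
    by (auto simp: words_on_def)
  have r: "r1 \<in> words_on Xs" "r2 \<in> words_on Xs" using R pe_rel by auto
  then have "filter ?P r1 = r1" "filter ?P r2 = r2" by (auto simp: filter_words_on)
  note rr = this
  have "filter ?P (u @ r1 @ v) = filter ?P u @ r1 @ filter ?P v"
       "filter ?P (u @ r2 @ v) = filter ?P u @ r2 @ filter ?P v" using rr by simp_all
  moreover have "word_eval G f (filter ?P u @ r1 @ filter ?P v) =
      word_eval G f (filter ?P u) \<otimes> (word_eval G f r1 \<otimes> word_eval G f (filter ?P v))"
    using r fu fv by (simp add: word_eval_append[OF f])
  moreover have "word_eval G f (filter ?P u @ r2 @ filter ?P v) =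
      word_eval G f (filter ?P u) \<otimes> (word_eval G f r2 \<otimes> word_eval G f (filter ?P v))"
    using r fu fv by (simp add: word_eval_append[OF f])
  ultimately show ?case using Rv[OF pe_rel] by (simp only:)
next
  case (pe_refl w) show ?case by (rule refl)
next
  case (pe_sym u v) show ?case using pe_sym.IH by (rule sym)
next
  case (pe_trans u v w) show ?case using pe_trans.IH by (rule trans)
qed

lemma induced_map_class:
  assumes f: "f ` Xs \<subseteq> carrier G"
    and R: "R \<subseteq> words_on Xs \<times> words_on Xs"
    and Rv: "\<And>r1 r2. (r1, r2) \<in> R \<Longrightarrow> word_eval G f r1 = word_eval G f r2"
    and w: "w \<in> words_on Xs"
  shows "induced_map G f (pres_class Xs R w) = word_eval G f w"
proof -
  let ?a = "SOME a. a \<in> pres_class Xs R w"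
  have "?a \<in> pres_class Xs R w" using pres_class_self[OF w] by (rule someI)
  then have a: "?a \<in> words_on Xs" "pres_eq R w ?a" by (auto simp: pres_class_def)
  have "word_eval G f (filter (\<lambda>p. fst p \<in> Xs) w) = word_eval G f (filter (\<lambda>p. fst p \<in> Xs) ?a)"
    by (rule word_eval_pres_eq[OF f R Rv a(2)])
  moreover have "filter (\<lambda>p. fst p \<in> Xs) w = w" "filter (\<lambda>p. fst p \<in> Xs) ?a = ?a"
    using w a(1) by (auto simp: filter_words_on)
  ultimately show ?thesis by (simp add: induced_map_def)
qed

lemma induced_map_hom:
  assumes f: "f ` Xs \<subseteq> carrier G"
    and R: "R \<subseteq> words_on Xs \<times> words_on Xs"
    and Rv: "\<And>r1 r2. (r1, r2) \<in> R \<Longrightarrow> word_eval G f r1 = word_eval G f r2"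
  shows "induced_map G f \<in> hom (presented_group Xs R) G"
proof (rule homI)
  fix x assume "x \<in> carrier (presented_group Xs R)"
  then obtain w where w: "w \<in> words_on Xs" "x = pres_class Xs R w" by (auto simp: pg_carrier)
  then show "induced_map G f x \<in> carrier G"
    using induced_map_class[OF f R Rv] word_eval_closed[OF f] by simp
next
  fix x y assume "x \<in> carrier (presented_group Xs R)" "y \<in> carrier (presented_group Xs R)"
  then obtain u v where "u \<in> words_on Xs" "x = pres_class Xs R u" "v \<in> words_on Xs" "y = pres_class Xs R v"
    by (auto simp: pg_carrier)
  then show "induced_map G f (x \<otimes>\<^bsub>presented_group Xs R\<^esub> y) = induced_map G f x \<otimes> induced_map G f y"
    using induced_map_class[OF f R Rv] by (simp add: pg_mult word_eval_append[OF f])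
qed

end

lemma pg_word_eval:
  assumes "w \<in> words_on Xs"
  shows "word_eval (presented_group Xs R) (pres_gen Xs R) w = pres_class Xs R w"
  using assms
proof (induction w)
  case Nil then show ?case by (simp add: pg_one)
next
  case (Cons a w)
  obtain x b where a: "a = (x, b)" by force
  have x: "[(x, True)] \<in> words_on Xs" using Cons.prems a by simp
  have w: "w \<in> words_on Xs" using Cons.prems by simp
  show ?case
  proof (cases b)
    case True then show ?thesis using Cons a x w by (simp add: pres_gen_def pg_mult)
  next
    case False then show ?thesis using Cons a x w by (simp add: pres_gen_def pg_mult pg_inv)
  qed
qed

lemma pg_gen_closed: "x \<in> Xs \<Longrightarrow> pres_gen Xs R x \<in> carrier (presented_group Xs R)"
  unfolding pres_gen_def pg_carrier by (rule imageI) simp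

lemma pg_central_by_gens:
  assumes g: "g \<in> carrier (presented_group Xs R)"
    and c: "\<And>x. x \<in> Xs \<Longrightarrow> pres_gen Xs R x \<otimes>\<^bsub>presented_group Xs R\<^esub> g = g \<otimes>\<^bsub>presented_group Xs R\<^esub> pres_gen Xs R x"
    and h: "h \<in> carrier (presented_group Xs R)"
  shows "h \<otimes>\<^bsub>presented_group Xs R\<^esub> g = g \<otimes>\<^bsub>presented_group Xs R\<^esub> h"
proof -
  interpret P: group "presented_group Xs R" by (rule pg_group)
  obtain w where w: "w \<in> words_on Xs" "h = pres_class Xs R w" using h by (auto simp: pg_carrier)
  have gens: "pres_gen Xs R ` Xs \<subseteq> carrier (presented_group Xs R)" by (rule image_subsetI) (rule pg_gen_closed)
  have "word_eval (presented_group Xs R) (pres_gen Xs R) w \<otimes>\<^bsub>presented_group Xs R\<^esub> g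
        = g \<otimes>\<^bsub>presented_group Xs R\<^esub> word_eval (presented_group Xs R) (pres_gen Xs R) w"
    using w(1)
  proof (induction w)
    case Nil then show ?case using g by simp
  next
    case (Cons a w)
    obtain x b where a: "a = (x, b)" by force
    have x: "x \<in> Xs" using Cons.prems a by simp
    have ww: "w \<in> words_on Xs" using Cons.prems by simp
    let ?e = "pres_gen Xs R x"
    let ?E = "word_eval (presented_group Xs R) (pres_gen Xs R) w"
    have e: "?e \<in> carrier (presented_group Xs R)" by (rule pg_gen_closed[OF x])
    have E: "?E \<in> carrier (presented_group Xs R)" using P.word_eval_closed[OF gens ww] .
    have ce: "?e \<otimes>\<^bsub>presented_group Xs R\<^esub> g = g \<otimes>\<^bsub>presented_group Xs R\<^esub> ?e" by (rule c[OF x])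
    have cie: "inv\<^bsub>presented_group Xs R\<^esub> ?e \<otimes>\<^bsub>presented_group Xs R\<^esub> g = g \<otimes>\<^bsub>presented_group Xs R\<^esub> inv\<^bsub>presented_group Xs R\<^esub> ?e"
      by (rule P.comm_inv[OF e g ce])
    have ev: "word_eval (presented_group Xs R) (pres_gen Xs R) (a # w)
        = (if b then ?e else inv\<^bsub>presented_group Xs R\<^esub> ?e) \<otimes>\<^bsub>presented_group Xs R\<^esub> ?E"
      using a by simp
    have ie: "(if b then ?e else inv\<^bsub>presented_group Xs R\<^esub> ?e) \<in> carrier (presented_group Xs R)"
      using e by simp
    have ic: "(if b then ?e else inv\<^bsub>presented_group Xs R\<^esub> ?e) \<otimes>\<^bsub>presented_group Xs R\<^esub> g
       = g \<otimes>\<^bsub>presented_group Xs R\<^esub> (if b then ?e else inv\<^bsub>presented_group Xs R\<^esub> ?e)"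
      using ce cie by simp
    show ?case unfolding ev by (rule P.comm_prod[OF ie E g ic Cons.IH[OF ww]])
  qed
  then show ?thesis using w pg_word_eval by metis
qed

context group begin
lemma inv_cancel_l: "x \<in> carrier G \<Longrightarrow> y \<in> carrier G \<Longrightarrow> inv x \<otimes> (x \<otimes> y) = y"
  by (simp add: m_assoc[symmetric])
lemma inv_cancel_r: "x \<in> carrier G \<Longrightarrow> y \<in> carrier G \<Longrightarrow> x \<otimes> (inv x \<otimes> y) = y"
  by (simp add: m_assoc[symmetric])
end

locale coxctx =
  fixes m :: "'s \<Rightarrow> 's \<Rightarrow> enat"
  assumes cm: "coxeter_matrix m"
begin

abbreviation "W \<equiv> coxeter_group m"
abbreviation "A \<equiv> adj_group m"
abbreviation "Q \<equiv> coxeter_quandle m"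
abbreviation "CR \<equiv> coxeter_rels m"
abbreviation "AR \<equiv> adj_rels m"

lemma W_group: "group W" by (simp add: coxeter_group_def pg_group)

sublocale W: group W by (rule W_group)

lemma gen_def': "cox_gen m s = pres_class UNIV CR [(s, True)]"
  by (simp add: cox_gen_def pres_gen_def)

lemma words_UNIV [simp]: "w \<in> words_on UNIV"
  by (simp add: words_on_def)

lemma gen_closed [simp]: "cox_gen m s \<in> carrier W"
  unfolding gen_def' coxeter_group_def pg_carrier by (rule imageI) simp

lemma gen_sq: "cox_gen m s \<otimes>\<^bsub>W\<^esub> cox_gen m s = \<one>\<^bsub>W\<^esub>"
proof -
  have mss: "m s s = enat 1" using cm by (simp add: coxeter_matrix_def one_enat_def)
  have r: "([(s, True), (s, True)], []) \<in> CR"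
    unfolding coxeter_rels_def using mss
    by (intro CollectI exI[of _ s] exI[of _ s] exI[of _ 1]) simp
  have "pres_eq CR ([] @ [(s, True), (s, True)] @ []) ([] @ [] @ [])"
    by (rule pres_eq.pe_rel[OF r])
  then have "pres_eq CR [(s, True), (s, True)] []" by simp
  then show ?thesis
    unfolding gen_def' coxeter_group_def
    by (simp add: pg_mult pg_one pres_class_eqI)
qed

lemma gen_inv [simp]: "inv\<^bsub>W\<^esub> (cox_gen m s) = cox_gen m s"
  by (rule W.inv_equality[OF gen_sq]) simp_all

lemma cox_prod_simps [simp]: "cox_prod m [] = \<one>\<^bsub>W\<^esub>"
  "cox_prod m (s # ss) = cox_gen m s \<otimes>\<^bsub>W\<^esub> cox_prod m ss"
  by (simp_all add: cox_prod_def)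

lemma cox_prod_closed [simp]: "cox_prod m ss \<in> carrier W"
  by (induction ss) simp_all

lemma word_eval_cox: "word_eval W (cox_gen m) w = cox_prod m (map fst w)"
proof (induction w)
  case (Cons p w) then show ?case by (cases p) simp
qed simp

lemma elem_cox_prod:
  assumes "x \<in> carrier W" shows "\<exists>ss. cox_prod m ss = x"
proof -
  obtain w where w: "x = pres_class UNIV CR w"
    using assms by (auto simp: coxeter_group_def pg_carrier)
  have "word_eval W (pres_gen UNIV CR) w = x"
    unfolding w coxeter_group_def by (rule pg_word_eval) simp
  moreover have "pres_gen UNIV CR = cox_gen m" by (simp add: fun_eq_iff cox_gen_def)
  ultimately show ?thesis using word_eval_cox by metis
qed

lemma reduced_exists:
  assumes "x \<in> carrier W" shows "reduced_expr m x (SOME ss. reduced_expr m x ss)"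
proof -
  let ?P = "\<lambda>n. \<exists>ss. cox_prod m ss = x \<and> length ss = n"
  obtain ss0 where "cox_prod m ss0 = x" using elem_cox_prod[OF assms] by blast
  then have ex: "?P (length ss0)" by blast
  have "?P (LEAST n. ?P n)" using ex by (rule LeastI)
  then obtain ss where ss: "cox_prod m ss = x" "length ss = (LEAST n. ?P n)" by blast
  have "reduced_expr m x ss"
    unfolding reduced_expr_def
  proof (intro conjI allI impI)
    fix ts assume "cox_prod m ts = x"
    then have "?P (length ts)" by blast
    then show "length ss \<le> length ts" unfolding ss(2) by (rule Least_le)
  qed (rule ss(1))
  then show ?thesis by (rule someI)
qed

subsection \<open>Quandle\<close>

lemma quandle_iff: "q \<in> Q \<longleftrightarrow> (\<exists>w\<in>carrier W. \<exists>s. q = inv\<^bsub>W\<^esub> w \<otimes>\<^bsub>W\<^esub> cox_gen m s \<otimes>\<^bsub>W\<^esub> w)"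
  unfolding coxeter_quandle_def by blast

lemma quandle_closed: "q \<in> Q \<Longrightarrow> q \<in> carrier W"
  by (auto simp: quandle_iff)

lemma quandle_sq: assumes "q \<in> Q" shows "q \<otimes>\<^bsub>W\<^esub> q = \<one>\<^bsub>W\<^esub>"
proof -
  obtain w s where w: "w \<in> carrier W" "q = inv\<^bsub>W\<^esub> w \<otimes>\<^bsub>W\<^esub> cox_gen m s \<otimes>\<^bsub>W\<^esub> w"
    using assms by (auto simp: quandle_iff)
  have "q \<otimes>\<^bsub>W\<^esub> q = inv\<^bsub>W\<^esub> w \<otimes>\<^bsub>W\<^esub> (cox_gen m s \<otimes>\<^bsub>W\<^esub> (w \<otimes>\<^bsub>W\<^esub> (inv\<^bsub>W\<^esub> w \<otimes>\<^bsub>W\<^esub> (cox_gen m s \<otimes>\<^bsub>W\<^esub> w))))"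
    using w by (simp add: W.m_assoc)
  also have "\<dots> = inv\<^bsub>W\<^esub> w \<otimes>\<^bsub>W\<^esub> ((cox_gen m s \<otimes>\<^bsub>W\<^esub> cox_gen m s) \<otimes>\<^bsub>W\<^esub> w)"
    using w by (simp add: W.m_assoc W.inv_cancel_r)
  also have "\<dots> = \<one>\<^bsub>W\<^esub>" using w by (simp add: gen_sq)
  finally show ?thesis .
qed

lemma quandle_inv [simp]: "q \<in> Q \<Longrightarrow> inv\<^bsub>W\<^esub> q = q"
  by (rule W.inv_equality[OF quandle_sq]) (simp_all add: quandle_closed)

lemma quandle_conj:
  assumes g: "g \<in> carrier W" and q: "q \<in> Q"
  shows "inv\<^bsub>W\<^esub> g \<otimes>\<^bsub>W\<^esub> q \<otimes>\<^bsub>W\<^esub> g \<in> Q"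
proof -
  obtain w s where w: "w \<in> carrier W" "q = inv\<^bsub>W\<^esub> w \<otimes>\<^bsub>W\<^esub> cox_gen m s \<otimes>\<^bsub>W\<^esub> w"
    using q by (auto simp: quandle_iff)
  have "inv\<^bsub>W\<^esub> g \<otimes>\<^bsub>W\<^esub> q \<otimes>\<^bsub>W\<^esub> g
      = inv\<^bsub>W\<^esub> (w \<otimes>\<^bsub>W\<^esub> g) \<otimes>\<^bsub>W\<^esub> cox_gen m s \<otimes>\<^bsub>W\<^esub> (w \<otimes>\<^bsub>W\<^esub> g)"
    using w g by (simp add: W.m_assoc W.inv_mult_group)
  then show ?thesis unfolding quandle_iff using w g by blast
qed

lemma gen_in_quandle: "cox_gen m s \<in> Q"
proof -
  have "cox_gen m s = inv\<^bsub>W\<^esub> \<one>\<^bsub>W\<^esub> \<otimes>\<^bsub>W\<^esub> cox_gen m s \<otimes>\<^bsub>W\<^esub> \<one>\<^bsub>W\<^esub>" by simp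
  then show ?thesis unfolding quandle_iff by blast
qed

lemma quandle_op_in: "x \<in> Q \<Longrightarrow> y \<in> Q \<Longrightarrow> quandle_op m x y \<in> Q"
  using quandle_conj[of y x] quandle_closed[of y] by (simp add: quandle_op_def)

subsection \<open>Adjoint group\<close>

lemma AR_words: "AR \<subseteq> words_on Q \<times> words_on Q"
  by (auto simp: adj_rels_def quandle_op_in)

lemma A_group: "group A" by (simp add: adj_group_def pg_group)

sublocale A: group A by (rule A_group)

lemma AR_eval: "(r1, r2) \<in> AR \<Longrightarrow> word_eval W id r1 = word_eval W id r2"
  by (auto simp: adj_rels_def quandle_op_def quandle_closed W.m_assoc)

lemma id_Q: "id ` Q \<subseteq> carrier W" using quandle_closed by auto

lemma phi_hom: "adj_phi m \<in> hom A W"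
  unfolding adj_phi_def adj_group_def
  by (rule W.induced_map_hom[OF id_Q AR_words AR_eval])

sublocale phi: group_hom A W "adj_phi m"
  by (intro group_hom.intro group_hom_axioms.intro A_group W_group phi_hom)

lemma phi_class: "w \<in> words_on Q \<Longrightarrow> adj_phi m (pres_class Q AR w) = word_eval W id w"
  unfolding adj_phi_def by (rule W.induced_map_class[OF id_Q AR_words AR_eval])

lemma adj_gen_def': "adj_gen m x = pres_class Q AR [(x, True)]"
  by (simp add: adj_gen_def pres_gen_def)

lemma adj_gen_closed [simp]: "x \<in> Q \<Longrightarrow> adj_gen m x \<in> carrier A"
  unfolding adj_gen_def adj_group_def by (rule pg_gen_closed)

lemma phi_gen [simp]: "x \<in> Q \<Longrightarrow> adj_phi m (adj_gen m x) = x"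
  unfolding adj_gen_def' by (simp add: phi_class quandle_closed)

lemma adj_rel:
  assumes x: "x \<in> Q" and y: "y \<in> Q"
  shows "inv\<^bsub>A\<^esub> (adj_gen m y) \<otimes>\<^bsub>A\<^esub> adj_gen m x \<otimes>\<^bsub>A\<^esub> adj_gen m y = adj_gen m (quandle_op m x y)"
proof -
  have r: "([(y, False), (x, True), (y, True)], [(quandle_op m x y, True)]) \<in> AR"
    unfolding adj_rels_def using x y by blast
  have "pres_eq AR ([] @ [(y, False), (x, True), (y, True)] @ []) ([] @ [(quandle_op m x y, True)] @ [])"
    by (rule pres_eq.pe_rel[OF r])
  then have e: "pres_eq AR [(y, False), (x, True), (y, True)] [(quandle_op m x y, True)]" by simp
  have "inv\<^bsub>A\<^esub> (adj_gen m y) = pres_class Q AR [(y, False)]"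
    unfolding adj_gen_def' adj_group_def using y by (simp add: pg_inv)
  then show ?thesis
    unfolding adj_gen_def' using x y e
    by (simp add: adj_group_def pg_mult pres_class_eqI)
qed

lemma adj_swap:
  assumes x: "x \<in> Q" and y: "y \<in> Q"
  shows "adj_gen m x \<otimes>\<^bsub>A\<^esub> adj_gen m y = adj_gen m y \<otimes>\<^bsub>A\<^esub> adj_gen m (y \<otimes>\<^bsub>W\<^esub> x \<otimes>\<^bsub>W\<^esub> y)"
proof -
  have "adj_gen m y \<otimes>\<^bsub>A\<^esub> adj_gen m (quandle_op m x y)
     = adj_gen m y \<otimes>\<^bsub>A\<^esub> (inv\<^bsub>A\<^esub> (adj_gen m y) \<otimes>\<^bsub>A\<^esub> (adj_gen m x \<otimes>\<^bsub>A\<^esub> adj_gen m y))"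
    using adj_rel[OF x y] x y by (simp add: A.m_assoc)
  also have "\<dots> = adj_gen m x \<otimes>\<^bsub>A\<^esub> adj_gen m y"
    using x y by (simp add: A.inv_cancel_r)
  finally show ?thesis by (simp add: quandle_op_def)
qed

lemma adj_swap_inv:
  assumes x: "x \<in> Q" and y: "y \<in> Q"
  shows "adj_gen m x \<otimes>\<^bsub>A\<^esub> inv\<^bsub>A\<^esub> (adj_gen m y) = inv\<^bsub>A\<^esub> (adj_gen m y) \<otimes>\<^bsub>A\<^esub> adj_gen m (y \<otimes>\<^bsub>W\<^esub> x \<otimes>\<^bsub>W\<^esub> y)"
proof -
  let ?x' = "y \<otimes>\<^bsub>W\<^esub> x \<otimes>\<^bsub>W\<^esub> y"
  let ?e = "adj_gen m"
  have x': "?x' \<in> Q" using quandle_op_in[OF x y] by (simp add: quandle_op_def)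
  have yW: "y \<in> carrier W" and xW: "x \<in> carrier W" using x y quandle_closed by auto
  have "y \<otimes>\<^bsub>W\<^esub> ?x' \<otimes>\<^bsub>W\<^esub> y = (y \<otimes>\<^bsub>W\<^esub> y) \<otimes>\<^bsub>W\<^esub> x \<otimes>\<^bsub>W\<^esub> (y \<otimes>\<^bsub>W\<^esub> y)"
    using xW yW by (simp add: W.m_assoc)
  also have "\<dots> = x" using xW quandle_sq[OF y] by simp
  finally have yy: "y \<otimes>\<^bsub>W\<^esub> ?x' \<otimes>\<^bsub>W\<^esub> y = x" .
  have sw: "?e ?x' \<otimes>\<^bsub>A\<^esub> ?e y = ?e y \<otimes>\<^bsub>A\<^esub> ?e x"
    using adj_swap[OF x' y] yy by simp
  have "?e x \<otimes>\<^bsub>A\<^esub> inv\<^bsub>A\<^esub> (?e y) = inv\<^bsub>A\<^esub> (?e y) \<otimes>\<^bsub>A\<^esub> ((?e y \<otimes>\<^bsub>A\<^esub> ?e x) \<otimes>\<^bsub>A\<^esub> inv\<^bsub>A\<^esub> (?e y))"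
    using x y by (simp add: A.m_assoc A.inv_cancel_l)
  also have "\<dots> = inv\<^bsub>A\<^esub> (?e y) \<otimes>\<^bsub>A\<^esub> ((?e ?x' \<otimes>\<^bsub>A\<^esub> ?e y) \<otimes>\<^bsub>A\<^esub> inv\<^bsub>A\<^esub> (?e y))"
    by (simp only: sw)
  also have "\<dots> = inv\<^bsub>A\<^esub> (?e y) \<otimes>\<^bsub>A\<^esub> ?e ?x'"
    using x' y by (simp add: A.m_assoc)
  finally show ?thesis .
qed

end

context coxctx begin

lemma conj_gen:
  assumes h: "h \<in> carrier A" and x: "x \<in> Q"
  shows "adj_gen m x \<otimes>\<^bsub>A\<^esub> h = h \<otimes>\<^bsub>A\<^esub> adj_gen m (inv\<^bsub>W\<^esub> (adj_phi m h) \<otimes>\<^bsub>W\<^esub> x \<otimes>\<^bsub>W\<^esub> adj_phi m h)"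
proof -
  let ?e = "adj_gen m"
  obtain w where w: "w \<in> words_on Q" "h = pres_class Q AR w" using h by (auto simp: adj_group_def pg_carrier)
  have gens: "?e ` Q \<subseteq> carrier A" by (rule image_subsetI) (rule adj_gen_closed)
  have hw: "h = word_eval A ?e w"
    using pg_word_eval[OF w(1), of AR] w(2) by (simp add: adj_group_def adj_gen_def[abs_def])
  have "\<forall>x\<in>Q. ?e x \<otimes>\<^bsub>A\<^esub> word_eval A ?e w = word_eval A ?e w \<otimes>\<^bsub>A\<^esub>
      ?e (inv\<^bsub>W\<^esub> (adj_phi m (word_eval A ?e w)) \<otimes>\<^bsub>W\<^esub> x \<otimes>\<^bsub>W\<^esub> adj_phi m (word_eval A ?e w))"
    using w(1)
  proof (induction w)
    case Nil then show ?case by (simp add: quandle_closed)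
  next
    case (Cons p w)
    obtain y b where p: "p = (y, b)" by force
    have y: "y \<in> Q" using Cons.prems p by simp
    have ww: "w \<in> words_on Q" using Cons.prems by simp
    let ?E = "word_eval A ?e w"
    let ?P = "adj_phi m ?E"
    have E: "?E \<in> carrier A" by (rule A.word_eval_closed[OF gens ww])
    have P: "?P \<in> carrier W" using E by simp
    have yW: "y \<in> carrier W" using y quandle_closed by simp
    show ?case
    proof
      fix x assume x: "x \<in> Q"
      let ?x' = "y \<otimes>\<^bsub>W\<^esub> x \<otimes>\<^bsub>W\<^esub> y"
      have xW: "x \<in> carrier W" using x quandle_closed by simp
      have x': "?x' \<in> Q" using quandle_op_in[OF x y] by (simp add: quandle_op_def)
      have IH: "?e ?x' \<otimes>\<^bsub>A\<^esub> ?E = ?E \<otimes>\<^bsub>A\<^esub> ?e (inv\<^bsub>W\<^esub> ?P \<otimes>\<^bsub>W\<^esub> ?x' \<otimes>\<^bsub>W\<^esub> ?P)"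
        using Cons.IH[OF ww] x' by (rule bspec)
      let ?g = "if b then ?e y else inv\<^bsub>A\<^esub> (?e y)"
      have g: "?g \<in> carrier A" using y by simp
      have ev: "word_eval A ?e (p # w) = ?g \<otimes>\<^bsub>A\<^esub> ?E" using p by simp
      have phig: "adj_phi m ?g = y" using y by (cases b) (simp_all add: phi.hom_inv)
      have sw: "?e x \<otimes>\<^bsub>A\<^esub> ?g = ?g \<otimes>\<^bsub>A\<^esub> ?e ?x'"
        using adj_swap[OF x y] adj_swap_inv[OF x y] by (cases b) simp_all
      have arg: "inv\<^bsub>W\<^esub> (adj_phi m (?g \<otimes>\<^bsub>A\<^esub> ?E)) \<otimes>\<^bsub>W\<^esub> x \<otimes>\<^bsub>W\<^esub> adj_phi m (?g \<otimes>\<^bsub>A\<^esub> ?E)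
          = inv\<^bsub>W\<^esub> ?P \<otimes>\<^bsub>W\<^esub> ?x' \<otimes>\<^bsub>W\<^esub> ?P"
        using g E phig y yW xW P by (simp add: W.inv_mult_group W.m_assoc)
      have "?e x \<otimes>\<^bsub>A\<^esub> (?g \<otimes>\<^bsub>A\<^esub> ?E) = (?e x \<otimes>\<^bsub>A\<^esub> ?g) \<otimes>\<^bsub>A\<^esub> ?E"
        using g E x by (simp add: A.m_assoc)
      also have "\<dots> = ?g \<otimes>\<^bsub>A\<^esub> (?e ?x' \<otimes>\<^bsub>A\<^esub> ?E)"
        unfolding sw using g E x' by (simp add: A.m_assoc)
      also have "\<dots> = ?g \<otimes>\<^bsub>A\<^esub> (?E \<otimes>\<^bsub>A\<^esub> ?e (inv\<^bsub>W\<^esub> ?P \<otimes>\<^bsub>W\<^esub> ?x' \<otimes>\<^bsub>W\<^esub> ?P))"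
        unfolding IH ..
      also have "\<dots> = (?g \<otimes>\<^bsub>A\<^esub> ?E) \<otimes>\<^bsub>A\<^esub> ?e (inv\<^bsub>W\<^esub> (adj_phi m (?g \<otimes>\<^bsub>A\<^esub> ?E)) \<otimes>\<^bsub>W\<^esub> x \<otimes>\<^bsub>W\<^esub> adj_phi m (?g \<otimes>\<^bsub>A\<^esub> ?E))"
        unfolding arg using g E P x' quandle_conj[OF P x'] by (simp add: A.m_assoc)
      finally show "?e x \<otimes>\<^bsub>A\<^esub> word_eval A ?e (p # w) = word_eval A ?e (p # w) \<otimes>\<^bsub>A\<^esub>
          ?e (inv\<^bsub>W\<^esub> (adj_phi m (word_eval A ?e (p # w))) \<otimes>\<^bsub>W\<^esub> x \<otimes>\<^bsub>W\<^esub> adj_phi m (word_eval A ?e (p # w)))"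
        unfolding ev .
    qed
  qed
  then show ?thesis unfolding hw using x by (rule bspec)
qed


lemma adj_gen_eq: "adj_gen m = pres_gen Q AR"
  by (rule ext) (simp add: adj_gen_def)

lemma A_eq: "A = presented_group Q AR"
  by (simp add: adj_group_def)

lemma central:
  assumes k: "k \<in> kernel A W (adj_phi m)" and h: "h \<in> carrier A"
  shows "h \<otimes>\<^bsub>A\<^esub> k = k \<otimes>\<^bsub>A\<^esub> h"
proof -
  have kA: "k \<in> carrier A" and pk: "adj_phi m k = \<one>\<^bsub>W\<^esub>" using k by (auto simp: kernel_def)
  have c: "adj_gen m x \<otimes>\<^bsub>A\<^esub> k = k \<otimes>\<^bsub>A\<^esub> adj_gen m x" if x: "x \<in> Q" for x
  proof -
    have "inv\<^bsub>W\<^esub> (adj_phi m k) \<otimes>\<^bsub>W\<^esub> x \<otimes>\<^bsub>W\<^esub> adj_phi m k = x"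
      using pk x quandle_closed by simp
    then show ?thesis using conj_gen[OF kA x] by simp
  qed
  show ?thesis
    using pg_central_by_gens[of k Q AR h, OF kA[unfolded A_eq] c[unfolded adj_gen_eq A_eq] h[unfolded A_eq]]
    unfolding A_eq .
qed

subsection \<open>The map F\<close>

definition Fl :: "'s list \<Rightarrow> 's word set word set" where
  "Fl ss = foldr (\<lambda>s acc. adj_gen m (cox_gen m s) \<otimes>\<^bsub>A\<^esub> acc) ss \<one>\<^bsub>A\<^esub>"

lemma Fl_simps [simp]: "Fl [] = \<one>\<^bsub>A\<^esub>" "Fl (s # ss) = adj_gen m (cox_gen m s) \<otimes>\<^bsub>A\<^esub> Fl ss"
  by (simp_all add: Fl_def)

lemma Fl_closed [simp]: "Fl ss \<in> carrier A"
  by (induction ss) (simp_all add: gen_in_quandle)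

lemma phi_Fl [simp]: "adj_phi m (Fl ss) = cox_prod m ss"
  by (induction ss) (simp_all add: gen_in_quandle)

lemma F_Fl: "F_map m w = Fl (SOME ss. reduced_expr m w ss)"
  by (simp add: F_map_def Fl_def)

lemma F_closed: "F_map m w \<in> carrier A"
  by (simp add: F_Fl)

lemma F_section: assumes w: "w \<in> carrier W" shows "adj_phi m (F_map m w) = w"
proof -
  define ss where "ss = (SOME ss. reduced_expr m w ss)"
  have "reduced_expr m w ss" unfolding ss_def by (rule reduced_exists[OF w])
  then have "cox_prod m ss = w" unfolding reduced_expr_def by (rule conjunct1)
  then show ?thesis by (simp add: F_Fl ss_def[symmetric])
qed

lemma F_one: "F_map m \<one>\<^bsub>W\<^esub> = \<one>\<^bsub>A\<^esub>"
proof -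
  define ss where "ss = (SOME ss. reduced_expr m \<one>\<^bsub>W\<^esub> ss)"
  have "reduced_expr m \<one>\<^bsub>W\<^esub> ss" unfolding ss_def by (rule reduced_exists) simp
  then have "\<forall>ts. cox_prod m ts = \<one>\<^bsub>W\<^esub> \<longrightarrow> length ss \<le> length ts"
    unfolding reduced_expr_def by (rule conjunct2)
  then have "length ss \<le> length ([] :: 's list)" using cox_prod_simps(1) by blast
  then have "ss = []" by simp
  then show ?thesis by (simp add: F_Fl ss_def[symmetric])
qed

end

locale cext = E: group E + G: group G for E (structure) and G +
  fixes \<phi>
  assumes phi_hom: "\<phi> \<in> hom E G"
    and central: "\<And>k h. k \<in> kernel E G \<phi> \<Longrightarrow> h \<in> carrier E \<Longrightarrow> h \<otimes> k = k \<otimes> h"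
begin

abbreviation "Kn \<equiv> kernel E G \<phi>"
abbreviation "K \<equiv> E\<lparr>carrier := Kn\<rparr>"

lemma gh: "group_hom E G \<phi>"
  by (intro group_hom.intro group_hom_axioms.intro E.is_group G.is_group phi_hom)

lemma phi_mult [simp]: "x \<in> carrier E \<Longrightarrow> y \<in> carrier E \<Longrightarrow> \<phi> (x \<otimes> y) = \<phi> x \<otimes>\<^bsub>G\<^esub> \<phi> y"
  by (rule group_hom.hom_mult[OF gh])
lemma phi_closed [simp]: "x \<in> carrier E \<Longrightarrow> \<phi> x \<in> carrier G"
  by (rule group_hom.hom_closed[OF gh])
lemma phi_inv [simp]: "x \<in> carrier E \<Longrightarrow> \<phi> (inv x) = inv\<^bsub>G\<^esub> (\<phi> x)"
  by (rule group_hom.hom_inv[OF gh])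

lemma Kn_iff: "k \<in> Kn \<longleftrightarrow> k \<in> carrier E \<and> \<phi> k = \<one>\<^bsub>G\<^esub>"
  by (simp add: kernel_def)

lemma sub_Kn: "subgroup Kn E" by (rule group_hom.subgroup_kernel[OF gh])

lemma K_comm: "comm_group K"
proof -
  have "group K" by (rule subgroup.subgroup_is_group[OF sub_Kn E.is_group])
  then show ?thesis
    by (rule group.group_comm_groupI) (simp add: central Kn_iff)
qed

lemma K_inv: "k \<in> Kn \<Longrightarrow> inv\<^bsub>K\<^esub> k = inv k"
  by (rule E.m_inv_consistent[OF sub_Kn])

lemma Kn_closed: "k \<in> Kn \<Longrightarrow> k \<in> carrier E" by (simp add: Kn_iff)

lemma central_swap:
  assumes k: "k \<in> Kn" and a: "a \<in> carrier E" and z: "z \<in> carrier E"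
  shows "a \<otimes> (k \<otimes> z) = k \<otimes> (a \<otimes> z)"
proof -
  have kE: "k \<in> carrier E" using k by (simp add: Kn_iff)
  have "a \<otimes> (k \<otimes> z) = (a \<otimes> k) \<otimes> z" using kE a z by (simp add: E.m_assoc)
  also have "\<dots> = (k \<otimes> a) \<otimes> z" using central[OF k a] by simp
  also have "\<dots> = k \<otimes> (a \<otimes> z)" using kE a z by (simp add: E.m_assoc)
  finally show ?thesis .
qed

definition is_section where
  "is_section \<sigma> \<longleftrightarrow> \<sigma> \<in> carrier G \<rightarrow> carrier E \<and> (\<forall>g\<in>carrier G. \<phi> (\<sigma> g) = g)"

lemma sc_Kn:
  assumes s: "is_section \<sigma>" and a: "a \<in> carrier G" and b: "b \<in> carrier G"
  shows "section_cocycle E G \<sigma> a b \<in> Kn"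
proof -
  have sa: "\<sigma> a \<in> carrier E" "\<phi> (\<sigma> a) = a" using s a by (auto simp: is_section_def)
  have sb: "\<sigma> b \<in> carrier E" "\<phi> (\<sigma> b) = b" using s b by (auto simp: is_section_def)
  have sab: "\<sigma> (a \<otimes>\<^bsub>G\<^esub> b) \<in> carrier E" "\<phi> (\<sigma> (a \<otimes>\<^bsub>G\<^esub> b)) = a \<otimes>\<^bsub>G\<^esub> b"
    using s a b by (auto simp: is_section_def)
  show ?thesis unfolding section_cocycle_def Kn_iff
    using sa sb sab a b by simp
qed

lemma sc_cocycle:
  assumes s: "is_section \<sigma>"
  shows "two_cocycle G K (section_cocycle E G \<sigma>)"
  unfolding two_cocycle_def
proof (intro conjI ballI)
  fix a b assume "a \<in> carrier G" "b \<in> carrier G"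
  then show "section_cocycle E G \<sigma> a b \<in> carrier K" using sc_Kn[OF s] by simp
next
  fix a b d assume a: "a \<in> carrier G" and b: "b \<in> carrier G" and d: "d \<in> carrier G"
  let ?c = "section_cocycle E G \<sigma>"
  have sE: "\<And>g. g \<in> carrier G \<Longrightarrow> \<sigma> g \<in> carrier E" using s by (auto simp: is_section_def)
  have ab: "a \<otimes>\<^bsub>G\<^esub> b \<in> carrier G" and bd: "b \<otimes>\<^bsub>G\<^esub> d \<in> carrier G" using a b d by simp_all
  have abd: "a \<otimes>\<^bsub>G\<^esub> b \<otimes>\<^bsub>G\<^esub> d = a \<otimes>\<^bsub>G\<^esub> (b \<otimes>\<^bsub>G\<^esub> d)" using a b d by (simp add: G.m_assoc)
  let ?s1 = "\<sigma> a" and ?s2 = "\<sigma> b" and ?s3 = "\<sigma> d" and ?s12 = "\<sigma> (a \<otimes>\<^bsub>G\<^esub> b)"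
    and ?s23 = "\<sigma> (b \<otimes>\<^bsub>G\<^esub> d)" and ?s123 = "\<sigma> (a \<otimes>\<^bsub>G\<^esub> (b \<otimes>\<^bsub>G\<^esub> d))"
  have e: "?s1 \<in> carrier E" "?s2 \<in> carrier E" "?s3 \<in> carrier E" "?s12 \<in> carrier E"
    "?s23 \<in> carrier E" "?s123 \<in> carrier E" using sE a b d ab bd by simp_all
  have z: "?c b d \<in> Kn" using sc_Kn[OF s b d] .
  have z2: "?c a b \<in> Kn" using sc_Kn[OF s a b] .
  have z3: "?c (a \<otimes>\<^bsub>G\<^esub> b) d \<in> carrier E" using sc_Kn[OF s ab d] Kn_closed by blast
  have "?c b d \<otimes> ?c a (b \<otimes>\<^bsub>G\<^esub> d) = ?c b d \<otimes> (?s1 \<otimes> (?s23 \<otimes> inv ?s123))"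
    unfolding section_cocycle_def using e by (simp add: E.m_assoc)
  also have "\<dots> = ?s1 \<otimes> (?c b d \<otimes> (?s23 \<otimes> inv ?s123))"
    using central_swap[OF z, of ?s1 "?s23 \<otimes> inv ?s123"] e by simp
  also have "\<dots> = ?s1 \<otimes> (?s2 \<otimes> (?s3 \<otimes> inv ?s123))"
    unfolding section_cocycle_def using e by (simp add: E.m_assoc E.inv_cancel_l)
  finally have L: "?c b d \<otimes> ?c a (b \<otimes>\<^bsub>G\<^esub> d) = ?s1 \<otimes> (?s2 \<otimes> (?s3 \<otimes> inv ?s123))" .
  have "?c (a \<otimes>\<^bsub>G\<^esub> b) d \<otimes> ?c a b = ?c a b \<otimes> ?c (a \<otimes>\<^bsub>G\<^esub> b) d"
    using central[OF z2 z3] .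
  also have "\<dots> = ?s1 \<otimes> (?s2 \<otimes> (?s3 \<otimes> inv ?s123))"
    unfolding section_cocycle_def abd using e by (simp add: E.m_assoc E.inv_cancel_l)
  finally show "?c b d \<otimes>\<^bsub>K\<^esub> ?c a (b \<otimes>\<^bsub>G\<^esub> d) = ?c (a \<otimes>\<^bsub>G\<^esub> b) d \<otimes>\<^bsub>K\<^esub> ?c a b"
    using L by simp
qed

lemma sc_coh:
  assumes s: "is_section \<sigma>" and t: "is_section \<tau>"
  shows "cohomologous G K (section_cocycle E G \<sigma>) (section_cocycle E G \<tau>)"
proof -
  define f where "f = (\<lambda>g. \<sigma> g \<otimes> inv (\<tau> g))"
  have sE: "\<And>g. g \<in> carrier G \<Longrightarrow> \<sigma> g \<in> carrier E" "\<And>g. g \<in> carrier G \<Longrightarrow> \<phi> (\<sigma> g) = g"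
    using s by (auto simp: is_section_def)
  have tE: "\<And>g. g \<in> carrier G \<Longrightarrow> \<tau> g \<in> carrier E" "\<And>g. g \<in> carrier G \<Longrightarrow> \<phi> (\<tau> g) = g"
    using t by (auto simp: is_section_def)
  have fK: "\<And>g. g \<in> carrier G \<Longrightarrow> f g \<in> Kn"
    unfolding f_def Kn_iff using sE tE by simp
  have fE: "\<And>g. g \<in> carrier G \<Longrightarrow> f g \<in> carrier E" using fK Kn_closed by blast
  have sf: "\<And>g. g \<in> carrier G \<Longrightarrow> \<sigma> g = f g \<otimes> \<tau> g"
    unfolding f_def using sE tE by (simp add: E.m_assoc)
  show ?thesis unfolding cohomologous_def
  proof (intro bexI ballI)
    show "f \<in> carrier G \<rightarrow> carrier K" using fK by simp
  next
    fix a b assume a: "a \<in> carrier G" and b: "b \<in> carrier G"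
    have ab: "a \<otimes>\<^bsub>G\<^esub> b \<in> carrier G" using a b by simp
    let ?A = "\<tau> a" and ?B = "\<tau> b" and ?C = "\<tau> (a \<otimes>\<^bsub>G\<^esub> b)"
    let ?p = "f a" and ?q = "f b" and ?r = "f (a \<otimes>\<^bsub>G\<^esub> b)"
    have e: "?A \<in> carrier E" "?B \<in> carrier E" "?C \<in> carrier E" "?p \<in> carrier E" "?q \<in> carrier E"
      "?r \<in> carrier E" using a b ab tE fE by simp_all
    let ?X = "?A \<otimes> ?B \<otimes> inv ?C"
    have X: "?X \<in> carrier E" using e by simp
    have pq: "?p \<otimes> ?q \<in> Kn" using fK a b subgroup.m_closed[OF sub_Kn] by blast
    have "section_cocycle E G \<sigma> a b = (?p \<otimes> ?A) \<otimes> (?q \<otimes> ?B) \<otimes> inv (?r \<otimes> ?C)"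
      unfolding section_cocycle_def using sf a b ab by simp
    also have "\<dots> = ?p \<otimes> (?A \<otimes> (?q \<otimes> (?B \<otimes> (inv ?C \<otimes> inv ?r))))"
      using e by (simp add: E.m_assoc E.inv_mult_group)
    also have "\<dots> = ?p \<otimes> (?q \<otimes> (?A \<otimes> (?B \<otimes> (inv ?C \<otimes> inv ?r))))"
      using central_swap[OF fK[OF b], of ?A "?B \<otimes> (inv ?C \<otimes> inv ?r)"] e by simp
    also have "\<dots> = (?p \<otimes> ?q) \<otimes> ?X \<otimes> inv ?r"
      using e by (simp add: E.m_assoc)
    also have "\<dots> = ?X \<otimes> (?p \<otimes> ?q) \<otimes> inv ?r"
      using central[OF pq X] by simp
    also have "\<dots> = ?X \<otimes> (?p \<otimes> ?q \<otimes> inv\<^bsub>K\<^esub> ?r)"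
      using e K_inv[OF fK[OF ab]] by (simp add: E.m_assoc)
    also have "\<dots> = section_cocycle E G \<tau> a b \<otimes>\<^bsub>K\<^esub> (f a \<otimes>\<^bsub>K\<^esub> f b \<otimes>\<^bsub>K\<^esub> inv\<^bsub>K\<^esub> f (a \<otimes>\<^bsub>G\<^esub> b))"
      unfolding section_cocycle_def by simp
    finally show "section_cocycle E G \<sigma> a b = section_cocycle E G \<tau> a b \<otimes>\<^bsub>K\<^esub> (f a \<otimes>\<^bsub>K\<^esub> f b \<otimes>\<^bsub>K\<^esub> inv\<^bsub>K\<^esub> f (a \<otimes>\<^bsub>G\<^esub> b))" .
  qed
qed

lemma coh_trans:
  assumes cd: "cohomologous G K c d" and de: "cohomologous G K d e"
    and ev: "\<And>a b. a \<in> carrier G \<Longrightarrow> b \<in> carrier G \<Longrightarrow> e a b \<in> carrier K"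
  shows "cohomologous G K c e"
proof -
  interpret Kc: comm_group K by (rule K_comm)
  obtain f where f: "f \<in> carrier G \<rightarrow> carrier K"
    and cf: "\<And>a b. a \<in> carrier G \<Longrightarrow> b \<in> carrier G \<Longrightarrow>
       c a b = d a b \<otimes>\<^bsub>K\<^esub> (f a \<otimes>\<^bsub>K\<^esub> f b \<otimes>\<^bsub>K\<^esub> inv\<^bsub>K\<^esub> f (a \<otimes>\<^bsub>G\<^esub> b))"
    using cd unfolding cohomologous_def by blast
  obtain g where g: "g \<in> carrier G \<rightarrow> carrier K"
    and dg: "\<And>a b. a \<in> carrier G \<Longrightarrow> b \<in> carrier G \<Longrightarrow>
       d a b = e a b \<otimes>\<^bsub>K\<^esub> (g a \<otimes>\<^bsub>K\<^esub> g b \<otimes>\<^bsub>K\<^esub> inv\<^bsub>K\<^esub> g (a \<otimes>\<^bsub>G\<^esub> b))"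
    using de unfolding cohomologous_def by blast
  show ?thesis unfolding cohomologous_def
  proof (intro bexI ballI)
    show "(\<lambda>x. g x \<otimes>\<^bsub>K\<^esub> f x) \<in> carrier G \<rightarrow> carrier K"
      using f g Kc.m_closed by (auto simp del: partial_object.simps)
  next
    fix a b assume a: "a \<in> carrier G" and b: "b \<in> carrier G"
    have ab: "a \<otimes>\<^bsub>G\<^esub> b \<in> carrier G" using a b by simp
    have fa: "f a \<in> carrier K" "f b \<in> carrier K" "f (a \<otimes>\<^bsub>G\<^esub> b) \<in> carrier K" using f a b ab by auto
    have ga: "g a \<in> carrier K" "g b \<in> carrier K" "g (a \<otimes>\<^bsub>G\<^esub> b) \<in> carrier K" using g a b ab by auto
    have eab: "e a b \<in> carrier K" using ev a b .
    show "c a b = e a b \<otimes>\<^bsub>K\<^esub> (g a \<otimes>\<^bsub>K\<^esub> f a \<otimes>\<^bsub>K\<^esub> (g b \<otimes>\<^bsub>K\<^esub> f b)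
         \<otimes>\<^bsub>K\<^esub> inv\<^bsub>K\<^esub> (g (a \<otimes>\<^bsub>G\<^esub> b) \<otimes>\<^bsub>K\<^esub> f (a \<otimes>\<^bsub>G\<^esub> b)))"
    proof -
      have iv: "inv\<^bsub>K\<^esub> (g (a \<otimes>\<^bsub>G\<^esub> b) \<otimes>\<^bsub>K\<^esub> f (a \<otimes>\<^bsub>G\<^esub> b))
          = inv\<^bsub>K\<^esub> g (a \<otimes>\<^bsub>G\<^esub> b) \<otimes>\<^bsub>K\<^esub> inv\<^bsub>K\<^esub> f (a \<otimes>\<^bsub>G\<^esub> b)"
        by (rule Kc.inv_mult) (use fa ga in simp_all)
      show ?thesis unfolding cf[OF a b] dg[OF a b] iv
        using fa ga eab by (simp only: Kc.m_ac Kc.m_closed Kc.inv_closed)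
    qed
  qed
qed

lemma main_generic:
  assumes F: "is_section F" and F1: "F \<one>\<^bsub>G\<^esub> = \<one>"
  shows "normalized_two_cocycle G K (section_cocycle E G F)
       \<and> coh_class G K (section_cocycle E G F) = extension_class E G \<phi>"
proof
  have FE: "\<And>g. g \<in> carrier G \<Longrightarrow> F g \<in> carrier E" using F by (auto simp: is_section_def)
  show "normalized_two_cocycle G K (section_cocycle E G F)"
    unfolding normalized_two_cocycle_def
  proof (intro conjI ballI)
    show "two_cocycle G K (section_cocycle E G F)" by (rule sc_cocycle[OF F])
  next
    fix a assume a: "a \<in> carrier G"
    show "section_cocycle E G F \<one>\<^bsub>G\<^esub> a = \<one>\<^bsub>K\<^esub>"
      unfolding section_cocycle_def using a FE F1 by simp
    show "section_cocycle E G F a \<one>\<^bsub>G\<^esub> = \<one>\<^bsub>K\<^esub>"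
      unfolding section_cocycle_def using a FE F1 by simp
  qed
next
  have secs: "{\<sigma>. \<sigma> \<in> carrier G \<rightarrow> carrier E \<and> (\<forall>g\<in>carrier G. \<phi> (\<sigma> g) = g)} = {\<sigma>. is_section \<sigma>}"
    by (simp add: is_section_def)
  show "coh_class G K (section_cocycle E G F) = extension_class E G \<phi>"
    unfolding extension_class_def secs
  proof
    show "coh_class G K (section_cocycle E G F) \<subseteq> (\<Union>\<sigma>\<in>{\<sigma>. is_section \<sigma>}. coh_class G K (section_cocycle E G \<sigma>))"
      using F by blast
  next
    show "(\<Union>\<sigma>\<in>{\<sigma>. is_section \<sigma>}. coh_class G K (section_cocycle E G \<sigma>)) \<subseteq> coh_class G K (section_cocycle E G F)"
    proof
      fix d assume "d \<in> (\<Union>\<sigma>\<in>{\<sigma>. is_section \<sigma>}. coh_class G K (section_cocycle E G \<sigma>))"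
      then obtain \<sigma> where s: "is_section \<sigma>" and d: "two_cocycle G K d"
        and dc: "cohomologous G K d (section_cocycle E G \<sigma>)"
        by (auto simp: coh_class_def)
      have "cohomologous G K d (section_cocycle E G F)"
        by (rule coh_trans[OF dc sc_coh[OF s F]]) (use sc_Kn[OF F] in simp)
      then show "d \<in> coh_class G K (section_cocycle E G F)" using d by (simp add: coh_class_def)
    qed
  qed
qed

end

theorem proposition4p3:
  fixes m :: "'s::finite \<Rightarrow> 's \<Rightarrow> enat"
  assumes "coxeter_matrix m"
  shows "normalized_two_cocycle (coxeter_group m) (C_group m) (cox_c m)
       \<and> coh_class (coxeter_group m) (C_group m) (cox_c m)
           = extension_class (adj_group m) (coxeter_group m) (adj_phi m)"
proof -
  interpret coxctx m by (rule coxctx.intro) (rule assms)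
  interpret cext "adj_group m" "coxeter_group m" "adj_phi m"
    by (intro cext.intro cext_axioms.intro A_group W_group phi_hom) (rule central)
  have F: "is_section (F_map m)" by (auto simp: is_section_def F_closed F_section)
  have eq: "cox_c m = section_cocycle (adj_group m) (coxeter_group m) (F_map m)"
    by (simp add: fun_eq_iff cox_c_def section_cocycle_def)
  have C: "C_group m = (adj_group m)\<lparr>carrier := kernel (adj_group m) (coxeter_group m) (adj_phi m)\<rparr>"
    by (simp add: C_group_def)
  show ?thesis unfolding eq C using main_generic[OF F F_one] .
qed

end
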